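(* Let the alternate quantum walk on $\mathbb{Z}^2$ with a single-qubit coin be defined on states $\sum_{x,y\in\mathbb{Z},\,c\in\{0,1\}}\beta_{x,y,c}(t)|x,y,c\rangle$, where one time step is $\hat S_y\hat H\hat S_x\hat H$, with $\hat H=\frac{1}{\sqrt2}\begin{pmatrix}1&1\\1&-1\end{pmatrix}$ acting on the coin, $\hat S_x|i,j,0\rangle=|i-1,j,0\rangle$, $\hat S_x|i,j,1\rangle=|i+1,j,1\rangle$, $\hat S_y|i,j,0\rangle=|i,j-1,0\rangle$, $\hat S_y|i,j,1\rangle=|i,j+1,1\rangle$. Start it at the origin with $\beta_{0,0,0}(0)=1/\sqrt2$, $\beta_{0,0,1}(0)=i/\sqrt2$ (all other amplitudes zero). Let the Grover walk have real amplitudes $\alpha_{x,y,c'}(t)$, $c'\in\{0,1,2,3\}$, evolving by $\alpha_{x,y,0}(t+1)=\sum_{j}G_{0j}\alpha_{x+1,y+1,j}(t)$, $\alpha_{x,y,1}(t+1)=\sum_{j}G_{1j}\alpha_{x+1,y-1,j}(t)$, $\alpha_{x,y,2}(t+1)=\sum_{j}G_{2j}\alpha_{x-1,y+1,j}(t)$, $\alpha_{x,y,3}(t+1)=\sum_{j}G_{3j}\alpha_{x-1,y-1,j}(t)$, where $G=\frac12\begin{pmatrix}-1&1&1&1\\1&-1&1&1\\1&1&-1&1\\1&1&1&-1\end{pmatrix}$, started at the origin with $\alpha_{0,0,0}(0)=1/2$, $\alpha_{0,0,1}(0)=-1/2$, $\alpha_{0,0,2}(0)=-1/2$, $\alpha_{0,0,3}(0)=1/2$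 (all other amplitudes zero). Then for all $t\ge0$ and all $(x,y)\in\mathbb{Z}^2$, \[ \beta_{x,y,0}(t)=(-1)^t e^{i\pi/4}\,[\alpha_{x,y,0}(t)+i\,\alpha_{x,y,2}(t)],\qquad \beta_{x,y,1}(t)=(-1)^t e^{i\pi/4}\,[-\alpha_{x,y,1}(t)+i\,\alpha_{x,y,3}(t)]. \]
   Context: $|x,y,c\rangle=|x,y\rangle_W\otimes|c\rangle_C$ with walker basis states $|x,y\rangle$, $x,y\in\mathbb{Z}$. In the Grover walk, coin states $|0\rangle,|1\rangle,|2\rangle,|3\rangle$ correspond to moves left-down, left-up, right-down, right-up, applied after the coin $G$. *)

theory Defs
  imports Complex_Main
begin

text \<open>States of the alternate walk: amplitudes beta x y c, coin c in {0,1}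
  (values at other coin indices are unused and kept 0).\<close>
type_synonym astate = "int \<Rightarrow> int \<Rightarrow> nat \<Rightarrow> complex"

definition hadamard :: "astate \<Rightarrow> astate" where
  "hadamard \<psi> = (\<lambda>x y c.
     if c = 0 then (\<psi> x y 0 + \<psi> x y 1) / complex_of_real (sqrt 2)
     else if c = 1 then (\<psi> x y 0 - \<psi> x y 1) / complex_of_real (sqrt 2)
     else 0)"

text \<open>S_x |i,j,0> = |i-1,j,0>, S_x |i,j,1> = |i+1,j,1>, so on amplitudes:\<close>
definition shift_x :: "astate \<Rightarrow> astate" where
  "shift_x \<psi> = (\<lambda>x y c.
     if c = 0 then \<psi> (x + 1) y 0 else if c = 1 then \<psi> (x - 1) y 1 else 0)"

definition shift_y :: "astate \<Rightarrow> astate" where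
  "shift_y \<psi> = (\<lambda>x y c.
     if c = 0 then \<psi> x (y + 1) 0 else if c = 1 then \<psi> x (y - 1) 1 else 0)"

definition alt_step :: "astate \<Rightarrow> astate" where
  "alt_step \<psi> = shift_y (hadamard (shift_x (hadamard \<psi>)))"

definition beta0 :: astate where
  "beta0 = (\<lambda>x y c. if x = 0 \<and> y = 0 then
      (if c = 0 then 1 / complex_of_real (sqrt 2)
       else if c = 1 then \<i> / complex_of_real (sqrt 2) else 0)
    else 0)"

primrec beta :: "nat \<Rightarrow> astate" where
  "beta 0 = beta0"
| "beta (Suc t) = alt_step (beta t)"

definition grover :: "nat \<Rightarrow> nat \<Rightarrow> real" where
  "grover j k = (if j = k then - 1 / 2 else 1 / 2)"

definition alpha0 :: "int \<Rightarrow> int \<Rightarrow> nat \<Rightarrow> real" where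
  "alpha0 = (\<lambda>x y c. if x = 0 \<and> y = 0 then
      (if c = 0 then 1/2 else if c = 1 then -1/2 else if c = 2 then -1/2
       else if c = 3 then 1/2 else 0)
    else 0)"

primrec alpha :: "nat \<Rightarrow> int \<Rightarrow> int \<Rightarrow> nat \<Rightarrow> real" where
  "alpha 0 = alpha0"
| "alpha (Suc t) = (\<lambda>x y c.
     if c = 0 then (\<Sum>j<4. grover 0 j * alpha t (x + 1) (y + 1) j)
     else if c = 1 then (\<Sum>j<4. grover 1 j * alpha t (x + 1) (y - 1) j)
     else if c = 2 then (\<Sum>j<4. grover 2 j * alpha t (x - 1) (y + 1) j)
     else if c = 3 then (\<Sum>j<4. grover 3 j * alpha t (x - 1) (y - 1) j)
     else 0)"

end

theory Submission
  imports Defs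
begin

lemma sum4: "(\<Sum>j<(4::nat). f j) = f 0 + f 1 + f 2 + (f 3 :: real)"
  by (simp add: eval_nat_numeral)

lemma alpha_Suc:
  "alpha (Suc t) x y 0 = (- alpha t (x+1) (y+1) 0 + alpha t (x+1) (y+1) 1 + alpha t (x+1) (y+1) 2 + alpha t (x+1) (y+1) 3)/2"
  "alpha (Suc t) x y 1 = (alpha t (x+1) (y-1) 0 - alpha t (x+1) (y-1) 1 + alpha t (x+1) (y-1) 2 + alpha t (x+1) (y-1) 3)/2"
  "alpha (Suc t) x y 2 = (alpha t (x-1) (y+1) 0 + alpha t (x-1) (y+1) 1 - alpha t (x-1) (y+1) 2 + alpha t (x-1) (y+1) 3)/2"
  "alpha (Suc t) x y 3 = (alpha t (x-1) (y-1) 0 + alpha t (x-1) (y-1) 1 + alpha t (x-1) (y-1) 2 - alpha t (x-1) (y-1) 3)/2"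
  by (simp_all add: sum4 grover_def field_simps)

lemma inv:
  "\<forall>x y. alpha t (x+2) y 2 + alpha t (x+2) y 3 + alpha t x y 0 + alpha t x y 1 = 0
     \<and> alpha t x y 1 + alpha t x y 3 + alpha t x (y-2) 0 + alpha t x (y-2) 2 = 0"
proof (induction t)
  case 0
  show ?case by (simp add: alpha0_def)
next
  case (Suc t)
  show ?case
  proof (intro allI conjI)
    fix x y :: int
    have h1: "alpha t (x+1) (y+1) 1 + alpha t (x+1) (y+1) 3 + alpha t (x+1) (y-1) 0 + alpha t (x+1) (y-1) 2 = 0"
      using Suc[rule_format, of "x+1" "y+1"] by simp
    show "alpha (Suc t) (x+2) y 2 + alpha (Suc t) (x+2) y 3 + alpha (Suc t) x y 0 + alpha (Suc t) x y 1 = 0"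
      unfolding alpha_Suc using h1 by (simp add: field_simps)
    have h2: "alpha t (x+1) (y-1) 2 + alpha t (x+1) (y-1) 3 + alpha t (x-1) (y-1) 0 + alpha t (x-1) (y-1) 1 = 0"
      using Suc[rule_format, of "x-1" "y-1"] by (simp add: algebra_simps)
    show "alpha (Suc t) x y 1 + alpha (Suc t) x y 3 + alpha (Suc t) x (y-2) 0 + alpha (Suc t) x (y-2) 2 = 0"
      unfolding alpha_Suc using h2 by (simp add: field_simps)
  qed
qed

lemma ss: "complex_of_real (sqrt 2) * complex_of_real (sqrt 2) = 2"
    by (simp flip: of_real_mult)
lemma d2: "(p / complex_of_real (sqrt 2) + q / complex_of_real (sqrt 2)) / complex_of_real (sqrt 2) = (p+q)/2"
  "(p / complex_of_real (sqrt 2) - q / complex_of_real (sqrt 2)) / complex_of_real (sqrt 2) = (p-q)/2"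
  by (simp_all add: add_divide_distrib[symmetric] diff_divide_distrib[symmetric] divide_divide_eq_left ss)
lemma beta_Suc:
  "beta (Suc t) x y 0 = (beta t (x+1) (y+1) 0 + beta t (x+1) (y+1) 1 + beta t (x-1) (y+1) 0 - beta t (x-1) (y+1) 1)/2"
  "beta (Suc t) x y 1 = (beta t (x+1) (y-1) 0 + beta t (x+1) (y-1) 1 - beta t (x-1) (y-1) 0 + beta t (x-1) (y-1) 1)/2"
  by (simp_all add: alt_step_def shift_x_def shift_y_def hadamard_def d2)

lemma main:
  "\<forall>x y. beta t x y 0 = (-1) ^ t * exp (\<i> * complex_of_real (pi / 4)) *
           (complex_of_real (alpha t x y 0) + \<i> * complex_of_real (alpha t x y 2))
       \<and> beta t x y 1 = (-1) ^ t * exp (\<i> * complex_of_real (pi / 4)) *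
           (- complex_of_real (alpha t x y 1) + \<i> * complex_of_real (alpha t x y 3))"
proof (induction t)
  case 0
  have e: "exp (\<i> * complex_of_real (pi / 4)) = complex_of_real (sqrt 2 / 2) * (1 + \<i>)"
  proof -
    have "exp (\<i> * complex_of_real (pi / 4)) = cis (pi/4)" by (simp add: cis_conv_exp mult.commute)
    also have "\<dots> = complex_of_real (sqrt 2 / 2) * (1 + \<i>)"
      by (simp add: cis.ctr sin_45 cos_45 Complex_eq algebra_simps)
    finally show ?thesis .
  qed
  have nz: "complex_of_real (sqrt 2) \<noteq> 0" by simp
  show ?case unfolding e using ss nz
    by (auto simp add: beta0_def alpha0_def field_simps)
next
  case (Suc t)
  define c where "c = (-1) ^ t * exp (\<i> * complex_of_real (pi / 4))"
  have cs: "(-1) ^ Suc t * exp (\<i> * complex_of_real (pi / 4)) = - c" by (simp add: c_def)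
  show ?case
  proof (intro allI conjI)
    fix x y :: int
    have I1: "alpha t (x+1) (y+1) 3 = - alpha t (x+1) (y+1) 2 - alpha t (x-1) (y+1) 0 - alpha t (x-1) (y+1) 1"
      using inv[of t, rule_format, of "x-1" "y+1"] by (simp add: algebra_simps)
    have I2: "alpha t (x+1) (y-1) 3 = - alpha t (x+1) (y-1) 2 - alpha t (x-1) (y-1) 0 - alpha t (x-1) (y-1) 1"
      using inv[of t, rule_format, of "x-1" "y-1"] by (simp add: algebra_simps)
    have IH: "\<And>x y. beta t x y 0 = c * (complex_of_real (alpha t x y 0) + \<i> * complex_of_real (alpha t x y 2))"
      "\<And>x y. beta t x y 1 = c * (- complex_of_real (alpha t x y 1) + \<i> * complex_of_real (alpha t x y 3))"
      using Suc unfolding c_def by blast+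
    show "beta (Suc t) x y 0 = (-1) ^ Suc t * exp (\<i> * complex_of_real (pi / 4)) *
           (complex_of_real (alpha (Suc t) x y 0) + \<i> * complex_of_real (alpha (Suc t) x y 2))"
      unfolding cs beta_Suc alpha_Suc IH I1
      by (simp add: field_simps)
    show "beta (Suc t) x y 1 = (-1) ^ Suc t * exp (\<i> * complex_of_real (pi / 4)) *
           (- complex_of_real (alpha (Suc t) x y 1) + \<i> * complex_of_real (alpha (Suc t) x y 3))"
      unfolding cs beta_Suc alpha_Suc IH I2
      by (simp add: field_simps)
  qed
qed

theorem theorem1:
  fixes t :: nat and x y :: int
  shows "beta t x y 0 = (-1) ^ t * exp (\<i> * complex_of_real (pi / 4)) *
           (complex_of_real (alpha t x y 0) + \<i> * complex_of_real (alpha t x y 2))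
       \<and> beta t x y 1 = (-1) ^ t * exp (\<i> * complex_of_real (pi / 4)) *
           (- complex_of_real (alpha t x y 1) + \<i> * complex_of_real (alpha t x y 3))"
  using main by blast

end
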